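(* Let $\theta\in[\pi/4,\pi/3)$, $o=(0,0)$, $p=(1,0)$, and let $\mathbb{R}^2_-=\{(x,y)\mid y\leq 0\}$. Let $u,v\in\mathbb{R}^2_-$ be points with $0<x_u<1$, $|\varphi(uv)-\pi|<\pi/6$, and $|ou|,|pv|\in[|uv|,1)$. Define $$\mathcal{T}'=u+|uv|\,\mathrm{Rot}_{\varphi(uv)}\big(\mathcal{T}_\theta^-\big).$$ Then $\mathcal{T}'\setminus\mathcal{T}_\theta\subseteq\mathbb{R}^2_-$.
   Context: The curved trapezoid is the open set $\mathcal{T}_\theta=\{(x,y)\mid 0<x<1,\ 0<y<\sin\theta,\ x^2+y^2<1,\ (x-1)^2+y^2<1\}$. For a set $\mathcal{O}\subset\mathbb{R}^2$: $\mathcal{O}^-$ is its reflection through the $x$-axis; $\mathrm{Rot}_{\gamma}(\mathcal{O})$ is its rotation by angle $\gamma$ counterclockwise about the origin; $\lambda\mathcal{O}=\{\lambda z\mid z\in\mathcal{O}\}$; $u+\mathcal{O}=\{u+z\mid z\in\mathcal{O}\}$. $x_u$ denotes the $x$-coordinate of $u$, and $\varphi(uv)$ is the polar angle (from the positive $x$-axis, modulo $2\pi$) of the vector $\overrightarrow{uv}$. *)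

theory Defs
  imports "HOL-Analysis.Analysis"
begin

text \<open>Points of the plane are represented as complex numbers (x + i y).\<close>

definition curved_trapezoid :: "real \<Rightarrow> complex set" where
  "curved_trapezoid \<theta> = {z. 0 < Re z \<and> Re z < 1 \<and> 0 < Im z \<and> Im z < sin \<theta>
      \<and> (Re z)\<^sup>2 + (Im z)\<^sup>2 < 1 \<and> (Re z - 1)\<^sup>2 + (Im z)\<^sup>2 < 1}"

definition reflect_x :: "complex set \<Rightarrow> complex set" where
  "reflect_x S = cnj ` S"

definition rot :: "real \<Rightarrow> complex set \<Rightarrow> complex set" where
  "rot \<gamma> S = (\<lambda>z. cis \<gamma> * z) ` S"

definition scale_set :: "real \<Rightarrow> complex set \<Rightarrow> complex set" where
  "scale_set r S = (\<lambda>z. complex_of_real r * z) ` S"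

definition translate_set :: "complex \<Rightarrow> complex set \<Rightarrow> complex set" where
  "translate_set u S = (\<lambda>z. u + z) ` S"

text \<open>Polar angle of the vector from u to v, taken in [0, 2 pi).\<close>
definition polar_angle :: "complex \<Rightarrow> complex \<Rightarrow> real" where
  "polar_angle u v = (if Arg (v - u) < 0 then Arg (v - u) + 2 * pi else Arg (v - u))"

definition lower_half_plane :: "complex set" where
  "lower_half_plane = {z. Im z \<le> 0}"

end

theory Submission
  imports Defs
begin

lemma lemA:
  fixes x y a b d :: real
  assumes "(x-a)^2+(y-b)^2 < d^2" "d^2 \<le> a^2+b^2" "y>0" "b\<le>0" "0<a" "a<1"
  shows "(x-1)^2+y^2<1"
proof -
  have h: "x^2+y^2 < 2*(x*a+y*b)" using assms(1,2) by (simp add: power2_diff algebra_simps)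
  have "y*b \<le> 0" using assms(3,4) by (simp add: mult_nonneg_nonpos)
  with h have xa: "x^2+y^2 < 2*(x*a)" by (simp add: distrib_left)
  have "x*a > 0" using xa by (smt (verit) zero_le_power2)
  hence "x > 0" using assms(5) by (simp add: zero_less_mult_iff)
  hence "x*a < x" using assms(6) by simp
  with xa show ?thesis by (simp add: power2_diff algebra_simps)
qed

lemma cmod_sq: "(cmod z)^2 = (Re z)^2 + (Im z)^2"
  by (simp add: cmod_power2)

theorem lemma6:
  fixes \<theta> :: real and u v :: complex
  assumes "pi / 4 \<le> \<theta>" and "\<theta> < pi / 3"
    and "u \<in> lower_half_plane" and "v \<in> lower_half_plane"
    and "0 < Re u" and "Re u < 1"
    and "\<bar>polar_angle u v - pi\<bar> < pi / 6"
    and "dist u v \<le> dist 0 u" and "dist 0 u < 1"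
    and "dist u v \<le> dist 1 v" and "dist 1 v < 1"
  shows "translate_set u (scale_set (dist u v) (rot (polar_angle u v)
            (reflect_x (curved_trapezoid \<theta>)))) - curved_trapezoid \<theta>
         \<subseteq> lower_half_plane"
proof
  define d where "d = dist u v"
  define \<phi> where "\<phi> = polar_angle u v"
  have dd: "d = cmod (v - u)" unfolding d_def by (simp add: dist_norm norm_minus_commute)
  have cisphi: "cis \<phi> = cis (Arg (v - u))"
    unfolding \<phi>_def polar_angle_def by (simp add: cis_mult[symmetric])
  have vu: "complex_of_real d * cis \<phi> = v - u"
    using rcis_cmod_Arg[of "v-u"] by (simp add: rcis_def dd cisphi)
  have "v \<noteq> u"
  proof
    assume "v = u"
    hence "\<phi> = 0" unfolding \<phi>_def polar_angle_def by (simp add: Arg_zero)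
    thus False using assms(7) \<phi>_def by simp
  qed
  have cphi: "cos \<phi> < 0"
  proof -
    have "-(pi/6) < \<phi> - pi" "\<phi> - pi < pi/6" using assms(7) unfolding \<phi>_def abs_less_iff by auto
    hence "0 < cos (\<phi> - pi)" using pi_gt_zero by (intro cos_gt_zero_pi) linarith+
    thus ?thesis by simp
  qed
  have "cos \<phi> = cos (Arg (v - u))"
    unfolding \<phi>_def polar_angle_def by simp
  have p: "Re (v - u) < 0"
  proof -
    have "Re (v - u) = Re (complex_of_real d * cis \<phi>)" using vu by simp
    also have "\<dots> = d * cos \<phi>" by simp
    finally show ?thesis using cphi \<open>v \<noteq> u\<close> dd by (simp add: mult_pos_neg)
  qed
  have s0: "sin \<theta> > 0" using assms(1,2) by (intro sin_gt_zero) auto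
  have d1: "d < 1" using assms(8,9) d_def by simp
  fix w assume wA: "w \<in> translate_set u (scale_set (dist u v) (rot (polar_angle u v)
            (reflect_x (curved_trapezoid \<theta>)))) - curved_trapezoid \<theta>"
  then obtain z where zT: "z \<in> curved_trapezoid \<theta>"
    and wz: "w = u + complex_of_real d * (cis \<phi> * cnj z)"
    unfolding translate_set_def scale_set_def rot_def reflect_x_def d_def \<phi>_def by auto
  have wnot: "w \<notin> curved_trapezoid \<theta>" using wA by simp
  have w2: "w = u + (v - u) * cnj z" using wz vu by (simp add: mult.assoc[symmetric])
  have z: "0 < Re z" "Re z < 1" "0 < Im z" "Im z < sin \<theta>"
     "(Re z)\<^sup>2 + (Im z)\<^sup>2 < 1" "(Re z - 1)\<^sup>2 + (Im z)\<^sup>2 < 1"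
    using zT unfolding curved_trapezoid_def by auto
  show "w \<in> lower_half_plane"
  proof (rule ccontr)
    assume "w \<notin> lower_half_plane"
    hence wpos: "Im w > 0" unfolding lower_half_plane_def by simp
    have u0: "Im u \<le> 0" "Im v \<le> 0" using assms(3,4) unfolding lower_half_plane_def by auto
    have dpos: "d > 0" using dd \<open>v \<noteq> u\<close> by simp
    have "(cmod z)^2 < 1^2" using z(5) cmod_sq[of z] by simp
    hence "cmod z < 1" by (rule power_less_imp_less_base) simp
    have m1: "cmod (w - u) < d"
    proof -
      have "cmod (w - u) = d * cmod z" using w2 dd by (simp add: norm_mult)
      also have "\<dots> < d" using \<open>cmod z < 1\<close> dpos by simp
      finally show ?thesis .
    qed
    have "(cmod (z - 1))^2 < 1^2" using z(6) cmod_sq[of "z - 1"] by simp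
    hence "cmod (z - 1) < 1" by (rule power_less_imp_less_base) simp
    have m2: "cmod (w - v) < d"
    proof -
      have "w - v = (v - u) * (cnj z - 1)" using w2 by (simp add: algebra_simps)
      hence "cmod (w - v) = d * cmod (cnj z - 1)" using dd by (simp add: norm_mult)
      also have "cmod (cnj z - 1) = cmod (z - 1)"
        by (metis complex_cnj_one complex_cnj_diff complex_mod_cnj)
      also have "d * cmod (z - 1) < d" using \<open>cmod (z - 1) < 1\<close> dpos by simp
      finally show ?thesis .
    qed
    have e1: "(Re w - Re u)^2 + (Im w - Im u)^2 < d^2"
    proof -
      have "(cmod (w-u))^2 < d^2" using power_strict_mono[OF m1 norm_ge_zero, of 2] by simp
      thus ?thesis using cmod_sq[of "w-u"] by simp
    qed
    have e2: "(Re w - Re v)^2 + (Im w - Im v)^2 < d^2"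
    proof -
      have "(cmod (w-v))^2 < d^2" using power_strict_mono[OF m2 norm_ge_zero, of 2] by simp
      thus ?thesis using cmod_sq[of "w-v"] by simp
    qed
    have du: "d^2 \<le> (Re u)^2 + (Im u)^2"
    proof -
      have "d^2 \<le> (cmod u)^2" using assms(8) d_def dpos by (intro power_mono) auto
      thus ?thesis using cmod_sq[of u] by simp
    qed
    have dv: "d^2 \<le> (Re v - 1)^2 + (Im v)^2"
    proof -
      have "dist 1 v = cmod (v - 1)" by (simp add: dist_norm norm_minus_commute)
      hence "d^2 \<le> (cmod (v - 1))^2" using assms(10) d_def dpos by (intro power_mono) auto
      thus ?thesis using cmod_sq[of "v - 1"] by simp
    qed
    have r1: "(Re w - 1)^2 + (Im w)^2 < 1"
      using lemA[OF e1 du wpos u0(1) assms(5,6)] .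
    have "Re v < Re u" using p by simp
    have "cmod (v - 1) < 1" using assms(11) by (simp add: dist_norm norm_minus_commute)
    hence "Re v > 0" using abs_Re_le_cmod[of "v-1"] by simp
    have r2: "(Re w)^2 + (Im w)^2 < 1"
      using lemA[of "1 - Re w" "1 - Re v" "Im w" "Im v" d] e2 dv wpos u0(2) \<open>Re v > 0\<close> \<open>Re v < Re u\<close> assms(6)
      by (simp add: power2_diff algebra_simps)
    have r3: "Im w < sin \<theta>"
    proof -
      define pp where "pp = Re (v - u)"
      define q where "q = Im (v - u)"
      have imw: "Im w = ((1 - Re z) * Im u + Re z * Im v) - pp * Im z"
        unfolding w2 pp_def q_def by (simp add: algebra_simps)
      have "(1 - Re z) * Im u + Re z * Im v \<le> 0"
        using z(1,2) u0 by (smt (verit) mult_nonneg_nonpos)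
      moreover have "- pp \<le> d" using dd abs_Re_le_cmod[of "v-u"] pp_def by simp
      moreover have "- pp * Im z < sin \<theta>"
      proof -
        have "- pp * Im z \<le> d * Im z" using mult_right_mono[OF \<open>- pp \<le> d\<close>, of "Im z"] z(3) by simp
        also have "\<dots> < 1 * sin \<theta>" using d1 dpos z(3,4) s0 by (intro mult_strict_mono) auto
        finally show ?thesis by simp
      qed
      ultimately show ?thesis using imw by linarith
    qed
    have a1: "(Re w - 1)^2 < 1" using r1 zero_le_power2[of "Im w"] by linarith
    have a2: "(Re w)^2 < 1" using r2 zero_le_power2[of "Im w"] by linarith
    have "\<bar>Re w - 1\<bar> < 1" "\<bar>Re w\<bar> < 1" using a1 a2 abs_square_less_1 by blast+
    hence "w \<in> curved_trapezoid \<theta>"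
      unfolding curved_trapezoid_def using r1 r2 r3 wpos by auto
    with wnot show False by simp
  qed
qed

end
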